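(* Let $\nu>-1$ be real. Denote by $0<j_1^\nu<j_2^\nu<\cdots$ the positive zeros of $J_\nu(\cdot;q^2)$ and by $0<j_1^{\nu+1}<j_2^{\nu+1}<\cdots$ those of $J_{\nu+1}(\cdot;q^2)$. Then they interlace: $$0<j_1^\nu<j_1^{\nu+1}<j_2^\nu<j_2^{\nu+1}<j_3^\nu<j_3^{\nu+1}<\cdots.$$
   Context: Fix $0<q<1$. For $a\in\mathbb C$ put $(a;q)_0=1$, $(a;q)_k=\prod_{i=0}^{k-1}(1-aq^i)$, $(a;q)_\infty=\prod_{i\ge0}(1-aq^i)$. For $\nu\in\mathbb C$ and $x\in\mathbb C\setminus\{0\}$ the Hahn–Exton $q$-Bessel function is $$J_\nu(x;q^2)=\frac{x^\nu}{(q^2;q^2)_\infty}\sum_{k=0}^\infty\frac{(-1)^kq^{k(k+1)}(q^{2\nu+2k+2};q^2)_\infty}{(q^2;q^2)_k}\,x^{2k},$$ with $x^\nu=\exp(\nu\operatorname{Log}x)$ (principal branch). For $\nu>-1$ the positive zeros of $J_\nu(\cdot;q^2)$ form an infinite increasing sequence. *)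

theory Defs
  imports "HOL-Analysis.Analysis"
begin

definition qpoch :: "complex \<Rightarrow> real \<Rightarrow> nat \<Rightarrow> complex" where
  "qpoch a q k = (\<Prod>i<k. 1 - a * of_real (q ^ i))"

definition qpoch_inf :: "complex \<Rightarrow> real \<Rightarrow> complex" where
  "qpoch_inf a q = lim (\<lambda>n. qpoch a q n)"

text \<open>Hahn--Exton q-Bessel function J_nu(x;q^2), principal branch x^nu = exp(nu Ln x).\<close>
definition hahn_exton_J :: "real \<Rightarrow> complex \<Rightarrow> complex \<Rightarrow> complex" where
  "hahn_exton_J q \<nu> x =
     exp (\<nu> * Ln x) / qpoch_inf (of_real (q^2)) (q^2) *
     (\<Sum>k. (-1) ^ k * of_real (q ^ (k * (k + 1))) *
            qpoch_inf (of_real q powr (2 * \<nu> + 2 * of_nat k + 2)) (q^2)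
            / qpoch (of_real (q^2)) (q^2) k * x ^ (2 * k))"

definition pos_zeros :: "real \<Rightarrow> real \<Rightarrow> real set" where
  "pos_zeros q \<nu> = {x. 0 < x \<and> hahn_exton_J q (of_real \<nu>) (of_real x) = 0}"

end

theory Submission
  imports Defs
begin


lemma enum_locfin:
  fixes S :: "real set"
  assumes fin: "\<And>M. finite (S \<inter> {..M})" and unb: "\<And>M. \<exists>z\<in>S. z > M"
  shows "\<exists>a::nat \<Rightarrow> real. strict_mono a \<and> range a = S"
proof -
  define least where "least U = (SOME m. m \<in> U \<and> (\<forall>z\<in>U. m \<le> z))" for U :: "real set"
  have least: "least U \<in> U \<and> (\<forall>z\<in>U. least U \<le> z)" if US: "U \<subseteq> S" "U \<noteq> {}" for U
  proof -
    obtain u where u: "u \<in> U" using US by auto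
    have f: "finite (U \<inter> {..u})" using fin[of u] US(1) by (meson finite_subset inf_mono order_refl)
    have ne: "U \<inter> {..u} \<noteq> {}" using u by auto
    define m where "m = Min (U \<inter> {..u})"
    have "m \<in> U" using Min_in[OF f ne] m_def by auto
    moreover have "\<forall>z\<in>U. m \<le> z"
    proof
      fix z assume z: "z \<in> U"
      show "m \<le> z"
      proof (cases "z \<le> u")
        case True then show ?thesis using Min_le[OF f] z m_def by auto
      next
        case False then show ?thesis using Min_le[OF f, of u] u m_def by auto
      qed
    qed
    ultimately have "\<exists>m. m \<in> U \<and> (\<forall>z\<in>U. m \<le> z)" by blast
    then show ?thesis unfolding least_def by (rule someI_ex)
  qed
  define a where "a = rec_nat (least S) (\<lambda>_ t. least {z\<in>S. t < z})"
  have a0: "a 0 = least S" by (simp add: a_def)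
  have aS: "a (Suc n) = least {z\<in>S. a n < z}" for n by (simp add: a_def)
  have Sne: "S \<noteq> {}" using unb[of 0] by auto
  have ne: "{z\<in>S. t < z} \<noteq> {}" for t using unb[of t] by auto
  have ain: "a n \<in> S" for n
    by (cases n) (use least[OF _ Sne] least[OF _ ne] a0 aS in auto)
  have inc: "a n < a (Suc n)" for n using least[OF _ ne, of "a n"] aS[of n] by auto
  have sm: "strict_mono a" by (rule strict_mono_Suc_iff[THEN iffD2]) (use inc in auto)
  have "S \<subseteq> range a"
  proof
    fix s assume s: "s \<in> S"
    show "s \<in> range a"
    proof (rule ccontr)
      assume ns: "s \<notin> range a"
      have lt: "a n < s" for n
      proof (induction n)
        case 0
        have "a 0 \<le> s" using least[OF _ Sne] s a0 by auto
        moreover have "a 0 \<noteq> s" using ns by auto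
        ultimately show ?case by auto
      next
        case (Suc n)
        have "a (Suc n) \<le> s" using least[OF _ ne, of "a n"] aS[of n] s Suc by auto
        moreover have "a (Suc n) \<noteq> s" using ns by (metis rangeI)
        ultimately show ?case by auto
      qed
      have "range a \<subseteq> S \<inter> {..s}" using ain lt by (auto intro: less_imp_le)
      hence "finite (range a)" using fin[of s] finite_subset by blast
      moreover have "inj a" using sm strict_mono_imp_inj_on by blast
      ultimately show False using finite_imageD by (metis infinite_UNIV_nat)
    qed
  qed
  then have "range a = S" using ain by auto
  then show ?thesis using sm by blast
qed

lemma nozero_sign:
  fixes F :: "real \<Rightarrow> real"
  assumes "x \<le> y" "\<And>t. isCont F t" "\<And>t. x \<le> t \<Longrightarrow> t \<le> y \<Longrightarrow> F t \<noteq> 0"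
  shows "F x * F y > 0"
proof (rule ccontr)
  assume "\<not> F x * F y > 0"
  hence "F x * F y \<le> 0" by simp
  hence "(F x \<le> 0 \<and> 0 \<le> F y) \<or> (F y \<le> 0 \<and> 0 \<le> F x)"
    unfolding mult_le_0_iff by blast
  then obtain t where "x \<le> t" "t \<le> y" "F t = 0"
    using IVT[of F x 0 y] IVT2[of F y 0 x] assms by blast
  then show False using assms by auto
qed

lemma interlace_generic:
  fixes F K F' K' :: "real \<Rightarrow> real"
  assumes dF: "\<And>x. (F has_real_derivative F' x) (at x)"
    and dK: "\<And>x. (K has_real_derivative K' x) (at x)"
    and F0: "F 0 > 0" and K0: "K 0 = 0"
    and D: "\<And>x. K' x * F x - K x * F' x > 0"
    and unb: "\<And>M. \<exists>z>M. F z = 0"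
  shows "\<exists>a b :: nat \<Rightarrow> real. strict_mono a \<and> range a = {z. 0 < z \<and> F z = 0} \<and>
           strict_mono b \<and> range b = {z. 0 < z \<and> K z = 0} \<and>
           0 < a 0 \<and> (\<forall>n. a n < b n \<and> b n < a (Suc n))"
proof -
  have cF: "isCont F x" for x using dF by (rule DERIV_isCont)
  have cK: "isCont K x" for x using dK by (rule DERIV_isCont)
  define Z where "Z = {z. 0 < z \<and> F z = 0}"
  have loc: "\<exists>d>0. \<forall>h. 0 < h \<and> h < d \<longrightarrow> F (p + h) * K p < 0 \<and> F (p - h) * K p > 0"
    if p: "F p = 0" for p
  proof -
    have KF: "K p * F' p < 0" using D[of p] p by simp
    show ?thesis
    proof (cases "F' p > 0")
      case True
      hence Kn: "K p < 0" using KF by (simp add: mult_less_0_iff)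
      obtain d1 where d1: "d1 > 0" "\<forall>h>0. h < d1 \<longrightarrow> F p < F (p + h)"
        using DERIV_pos_inc_right[OF dF True] by blast
      obtain d2 where d2: "d2 > 0" "\<forall>h>0. h < d2 \<longrightarrow> F (p - h) < F p"
        using DERIV_pos_inc_left[OF dF True] by blast
      show ?thesis
        by (rule exI[of _ "min d1 d2"]) (use d1 d2 Kn p in \<open>auto simp: mult_less_0_iff zero_less_mult_iff\<close>)
    next
      case False
      hence Fn: "F' p < 0" using KF by (cases "F' p = 0") auto
      hence Kp: "K p > 0" using KF by (simp add: mult_less_0_iff)
      obtain d1 where d1: "d1 > 0" "\<forall>h>0. h < d1 \<longrightarrow> F (p + h) < F p"
        using DERIV_neg_dec_right[OF dF Fn] by blast
      obtain d2 where d2: "d2 > 0" "\<forall>h>0. h < d2 \<longrightarrow> F p < F (p - h)"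
        using DERIV_neg_dec_left[OF dF Fn] by blast
      show ?thesis
        by (rule exI[of _ "min d1 d2"]) (use d1 d2 Kp p in \<open>auto simp: mult_less_0_iff zero_less_mult_iff\<close>)
    qed
  qed
  have Knz: "K p \<noteq> 0" if "F p = 0" for p using D[of p] that by auto
  have isol: "\<exists>d>0. \<forall>x. x \<noteq> p \<and> dist x p < d \<longrightarrow> F x \<noteq> 0" if p: "F p = 0" for p
  proof -
    obtain d where d: "d > 0" "\<forall>h. 0 < h \<and> h < d \<longrightarrow> F (p + h) * K p < 0 \<and> F (p - h) * K p > 0"
      using loc[OF p] by blast
    show ?thesis
    proof (rule exI[of _ d], intro conjI allI impI)
      fix x assume x: "x \<noteq> p \<and> dist x p < d"
      show "F x \<noteq> 0"
      proof (cases "x > p")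
        case True
        then show ?thesis using d(2)[rule_format, of "x - p"] x by (auto simp: dist_real_def)
      next
        case False
        then show ?thesis using d(2)[rule_format, of "p - x"] x by (auto simp: dist_real_def)
      qed
    qed (use d in auto)
  qed
  have closedZ: "closed {z. F z = 0}"
    using continuous_closed_vimage[of "{0}" F] cF by (auto simp: vimage_def)
  have fin: "finite (Z \<inter> {..M})" for M
  proof (rule ccontr)
    assume inf: "infinite (Z \<inter> {..M})"
    have sub: "Z \<inter> {..M} \<subseteq> {0..M}" unfolding Z_def by auto
    obtain x where x: "x islimpt (Z \<inter> {..M})"
      using compact_eq_Bolzano_Weierstrass[THEN iffD1, OF compact_Icc, rule_format, OF conjI[OF inf sub]]
      by blast
    have "x islimpt {z. F z = 0}" by (rule islimpt_subset[OF x]) (auto simp: Z_def)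
    hence Fx: "F x = 0" using closedZ closed_limpt by blast
    obtain d where d: "d > 0" "\<forall>y. y \<noteq> x \<and> dist y x < d \<longrightarrow> F y \<noteq> 0" using isol[OF Fx] by blast
    obtain y where "y \<in> Z \<inter> {..M}" "y \<noteq> x" "dist y x < d"
      using x d(1) unfolding islimpt_approachable by blast
    then show False using d(2) by (auto simp: Z_def)
  qed
  have unbZ: "\<exists>z\<in>Z. z > M" for M
  proof -
    obtain z where "z > max M 0" "F z = 0" using unb by blast
    then show ?thesis unfolding Z_def by auto
  qed
  obtain a :: "nat \<Rightarrow> real" where sma: "strict_mono a" and ra: "range a = Z"
    using enum_locfin[OF fin unbZ] by blast
  have aZ: "0 < a n" "F (a n) = 0" for n using ra unfolding Z_def by auto
  have betw: "F z \<noteq> 0" if "a n < z" "z < a (Suc n)" for n z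
  proof
    assume "F z = 0"
    moreover have "0 < z" using aZ[of n] that by auto
    ultimately have "z \<in> range a" using ra Z_def by auto
    then obtain m where m: "z = a m" by auto
    have "n < m" using that m sma strict_mono_less by blast
    moreover have "m < Suc n" using that m sma strict_mono_less by blast
    ultimately show False by auto
  qed
  have before: "F z \<noteq> 0" if "0 \<le> z" "z < a 0" for z
  proof
    assume Fz: "F z = 0"
    hence "z \<noteq> 0" using F0 by auto
    hence "z \<in> range a" using ra Z_def Fz that by auto
    then obtain m where m: "z = a m" by auto
    have "m < 0" using that m sma strict_mono_less by blast
    then show False by auto
  qed
  have mono: "K x / F x < K y / F y" if "x < y" "\<And>t. x \<le> t \<Longrightarrow> t \<le> y \<Longrightarrow> F t \<noteq> 0" for x y
  proof (rule DERIV_pos_imp_increasing[OF that(1)])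
    fix t assume t: "x \<le> t" "t \<le> y"
    have "((\<lambda>t. K t / F t) has_real_derivative (K' t * F t - K t * F' t) / (F t * F t)) (at t)"
      using DERIV_divide[OF dK dF that(2)[OF t]] by simp
    moreover have "(K' t * F t - K t * F' t) / (F t * F t) > 0"
    proof -
      have "F t * F t > 0" using that(2)[OF t] by (cases "F t > 0") (auto simp: mult_neg_neg)
      then show ?thesis using D[of t] by (intro divide_pos_pos) auto
    qed
    ultimately show "\<exists>y. ((\<lambda>t. K t / F t) has_real_derivative y) (at t) \<and> 0 < y" by blast
  qed
  have gap: "\<exists>!z. a n < z \<and> z < a (Suc n) \<and> K z = 0" for n
  proof -
    let ?l = "a n" and ?r = "a (Suc n)"
    have lr: "?l < ?r" using sma strict_mono_less by blast
    obtain d1 where d1: "d1 > 0" "\<forall>h. 0 < h \<and> h < d1 \<longrightarrow> F (?l + h) * K ?l < 0 \<and> F (?l - h) * K ?l > 0"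
      using loc[OF aZ(2)] by blast
    obtain d2 where d2: "d2 > 0" "\<forall>h. 0 < h \<and> h < d2 \<longrightarrow> F (?r + h) * K ?r < 0 \<and> F (?r - h) * K ?r > 0"
      using loc[OF aZ(2)] by blast
    define h where "h = min (min d1 d2) ((?r - ?l) / 2) / 2"
    have mm: "min (min d1 d2) ((?r - ?l) / 2) \<le> d1" "min (min d1 d2) ((?r - ?l) / 2) \<le> d2"
      "min (min d1 d2) ((?r - ?l) / 2) \<le> (?r - ?l) / 2"
      using min.cobounded1[of "min d1 d2" "(?r - ?l) / 2"] min.cobounded2[of "min d1 d2" "(?r - ?l) / 2"]
        min.cobounded1[of d1 d2] min.cobounded2[of d1 d2] by linarith+
    have mp: "min (min d1 d2) ((?r - ?l) / 2) > 0" using d1 d2 lr by simp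
    have h: "0 < h" "h < d1" "h < d2" "h < (?r - ?l) / 2" using mm mp unfolding h_def by linarith+
    have s: "F (?l + h) * F (?r - h) > 0"
    proof (rule nozero_sign[of "?l + h" "?r - h" F])
      show "?l + h \<le> ?r - h" using h by (auto simp: field_simps)
      show "isCont F t" for t by (rule cF)
      fix t assume "?l + h \<le> t" "t \<le> ?r - h"
      then show "F t \<noteq> 0" using h by (intro betw[of n t]) linarith+
    qed
    have k1: "F (?l + h) * K ?l < 0" using d1 h by auto
    have k2: "F (?r - h) * K ?r > 0" using d2 h by auto
    have "K ?l * K ?r < 0"
    proof -
      have "(F (?l + h) * K ?l) * (F (?r - h) * K ?r) < 0" using k1 k2 by (simp add: mult_neg_pos)
      hence "(F (?l + h) * F (?r - h)) * (K ?l * K ?r) < 0" by (simp add: algebra_simps)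
      hence "0 < (F (?l + h) * F (?r - h)) * (- (K ?l * K ?r))" by simp
      from zero_less_mult_pos[OF this s] show ?thesis by simp
    qed
    hence "(K ?l \<le> 0 \<and> 0 \<le> K ?r) \<or> (K ?r \<le> 0 \<and> 0 \<le> K ?l)"
      by (auto simp: mult_less_0_iff)
    then obtain z where z: "?l \<le> z" "z \<le> ?r" "K z = 0"
      using IVT[of K ?l 0 ?r] IVT2[of K ?r 0 ?l] cK lr by (meson less_imp_le)
    have "z \<noteq> ?l" "z \<noteq> ?r" using z Knz aZ by metis+
    hence ex: "?l < z \<and> z < ?r \<and> K z = 0" using z by auto
    have uq: "y = z" if y: "?l < y \<and> y < ?r \<and> K y = 0" for y
    proof (rule ccontr)
      assume "y \<noteq> z"
      then consider "y < z" | "z < y" by linarith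
      then show False
      proof cases
        case 1
        have "K y / F y < K z / F z" by (rule mono[OF 1], rule betw[of n]) (use y ex in linarith)+
        then show False using y ex by simp
      next
        case 2
        have "K z / F z < K y / F y" by (rule mono[OF 2], rule betw[of n]) (use y ex in linarith)+
        then show False using y ex by simp
      qed
    qed
    show ?thesis using ex uq by blast
  qed
  have nobefore: "K z \<noteq> 0" if "0 < z" "z \<le> a 0" for z
  proof (cases "z = a 0")
    case True then show ?thesis using Knz aZ by simp
  next
    case False
    hence "z < a 0" using that by simp
    hence "K 0 / F 0 < K z / F z" by (intro mono that(1), intro before) (use that in linarith)+
    then show ?thesis using K0 by auto
  qed
  define b where "b n = (THE z. a n < z \<and> z < a (Suc n) \<and> K z = 0)" for n
  have b: "a n < b n \<and> b n < a (Suc n) \<and> K (b n) = 0" for n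
    unfolding b_def by (rule theI') (rule gap)
  have smb: "strict_mono b"
    by (rule strict_mono_Suc_iff[THEN iffD2]) (use b in \<open>meson order.strict_trans\<close>)
  have rb: "range b = {z. 0 < z \<and> K z = 0}"
  proof
    show "range b \<subseteq> {z. 0 < z \<and> K z = 0}" using b aZ by (auto intro: order.strict_trans)
  next
    show "{z. 0 < z \<and> K z = 0} \<subseteq> range b"
    proof
      fix z assume "z \<in> {z. 0 < z \<and> K z = 0}"
      hence z: "0 < z" "K z = 0" by auto
      have za: "a 0 < z" using nobefore z by force
      obtain p where p: "p > z" "F p = 0" using unb by blast
      hence "p \<in> range a" using ra z unfolding Z_def by auto
      hence exm: "\<exists>m. z < a m" using p by auto
      define m where "m = (LEAST m. z < a m)"
      have m1: "z < a m" unfolding m_def by (rule LeastI_ex[OF exm])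
      have m0: "m \<noteq> 0"
      proof
        assume "m = 0"
        with m1 za show False by simp
      qed
      then obtain n where n: "m = Suc n" by (cases m) auto
      have "\<not> z < a n" using not_less_Least[of n "\<lambda>m. z < a m"] n m_def by auto
      moreover have "z \<noteq> a n" using Knz aZ z by metis
      ultimately have "a n < z" by auto
      hence "z = b n" using gap[of n] b[of n] z m1 n by blast
      then show "z \<in> range b" by auto
    qed
  qed
  show ?thesis
    by (rule exI[of _ a], rule exI[of _ b]) (use sma ra smb rb aZ b in \<open>auto simp: Z_def\<close>)
qed



definition rp :: "real \<Rightarrow> real \<Rightarrow> nat \<Rightarrow> real" where
  "rp x Q n = (\<Prod>i<n. 1 - x * Q ^ i)"

definition Pinf :: "real \<Rightarrow> real \<Rightarrow> real" where
  "Pinf x Q = lim (rp x Q)"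

lemma rp_0 [simp]: "rp x Q 0 = 1"
  by (simp add: rp_def)

lemma rp_Suc: "rp x Q (Suc n) = rp x Q n * (1 - x * Q ^ n)"
  by (simp add: rp_def)

lemma rp_shift: "rp x Q (Suc n) = (1 - x) * rp (x * Q) Q n"
  unfolding rp_def by (subst prod.lessThan_Suc_shift) (simp add: algebra_simps)

lemma rp_bounds:
  assumes "0 \<le> x" "x \<le> 1" "0 \<le> Q" "Q \<le> 1"
  shows "0 \<le> rp x Q n \<and> rp x Q n \<le> 1"
proof (induction n)
  case 0 then show ?case by (simp add: rp_def)
next
  case (Suc n)
  have "x * Q ^ n \<le> 1" using assms by (simp add: mult_le_one power_le_one)
  moreover have "0 \<le> x * Q ^ n" using assms by simp
  ultimately show ?case using Suc by (simp add: rp_Suc mult_le_one)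
qed

lemma rp_dec:
  assumes "0 \<le> x" "x \<le> 1" "0 \<le> Q" "Q \<le> 1"
  shows "decseq (rp x Q)"
proof (rule decseq_SucI)
  fix n
  have "x * Q ^ n \<le> 1" using assms by (simp add: mult_le_one power_le_one)
  moreover have "0 \<le> x * Q ^ n" using assms by simp
  ultimately show "rp x Q (Suc n) \<le> rp x Q n"
    using rp_bounds[OF assms, of n] by (simp add: rp_Suc mult_left_le)
qed

lemma rp_lim:
  assumes "0 \<le> x" "x \<le> 1" "0 \<le> Q" "Q \<le> 1"
  shows "rp x Q \<longlonglongrightarrow> Pinf x Q" "\<And>n. Pinf x Q \<le> rp x Q n"
proof -
  obtain L where L: "rp x Q \<longlonglongrightarrow> L" "\<forall>i. L \<le> rp x Q i"
    using decseq_convergent[OF rp_dec[OF assms], of 0] rp_bounds[OF assms] by blast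
  have "Pinf x Q = L" unfolding Pinf_def using L(1) by (rule limI)
  then show "rp x Q \<longlonglongrightarrow> Pinf x Q" "\<And>n. Pinf x Q \<le> rp x Q n" using L by auto
qed

lemma Pinf_bounds:
  assumes "0 \<le> x" "x \<le> 1" "0 \<le> Q" "Q \<le> 1"
  shows "0 \<le> Pinf x Q" "Pinf x Q \<le> 1"
proof -
  show "0 \<le> Pinf x Q"
    using rp_lim(1)[OF assms] rp_bounds[OF assms] by (meson LIMSEQ_le_const)
  show "Pinf x Q \<le> 1" using rp_lim(2)[OF assms, of 0] by (simp add: rp_def)
qed

lemma Pinf_rec:
  assumes "0 \<le> x" "x \<le> 1" "0 \<le> Q" "Q \<le> 1"
  shows "Pinf x Q = (1 - x) * Pinf (x * Q) Q"
proof -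
  have xQ: "0 \<le> x * Q" "x * Q \<le> 1" using assms by (auto simp: mult_le_one)
  have "(\<lambda>n. rp x Q (Suc n)) \<longlonglongrightarrow> Pinf x Q"
    using rp_lim(1)[OF assms] by (rule LIMSEQ_Suc)
  moreover have "(\<lambda>n. rp x Q (Suc n)) \<longlonglongrightarrow> (1 - x) * Pinf (x * Q) Q"
    unfolding rp_shift by (intro tendsto_mult tendsto_const rp_lim(1)[OF xQ assms(3,4)])
  ultimately show ?thesis using LIMSEQ_unique by blast
qed

lemma weier_prod:
  assumes "0 \<le> y" "0 \<le> Q" "Q < 1" "y \<le> 1"
  shows "rp y Q m \<ge> 1 - y * (\<Sum>i<m. Q ^ i)"
proof (induction m)
  case 0 then show ?case by (simp add: rp_def)
next
  case (Suc m)
  let ?S = "y * (\<Sum>i<m. Q ^ i)" and ?t = "y * Q ^ m"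
  have t: "0 \<le> ?t" "?t \<le> 1" using assms by (auto simp: mult_le_one power_le_one)
  have S: "0 \<le> ?S" using assms by (simp add: sum_nonneg)
  have "rp y Q (Suc m) = rp y Q m * (1 - ?t)" by (rule rp_Suc)
  also have "\<dots> \<ge> (1 - ?S) * (1 - ?t)" using Suc t by (intro mult_right_mono) auto
  finally have "rp y Q (Suc m) \<ge> 1 - ?S - ?t + ?S * ?t" by (simp add: algebra_simps)
  moreover have "?S * ?t \<ge> 0" using S t by simp
  ultimately show ?case by (simp add: algebra_simps)
qed

lemma rp_split: "rp x Q (N + m) = rp x Q N * rp (x * Q ^ N) Q m"
  by (induction m) (simp_all add: rp_Suc power_add algebra_simps)

lemma rp_pos:
  assumes "0 \<le> x" "x < 1" "0 \<le> Q" "Q < 1"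
  shows "rp x Q n > 0"
proof (induction n)
  case 0 then show ?case by (simp add: rp_def)
next
  case (Suc n)
  have "x * Q ^ n \<le> x" using assms by (simp add: mult_left_le power_le_one)
  then show ?case using Suc assms by (simp add: rp_Suc)
qed

lemma Pinf_pos:
  assumes "0 \<le> x" "x < 1" "0 \<le> Q" "Q < 1"
  shows "Pinf x Q > 0"
proof -
  have "(\<lambda>n. x * Q ^ n) \<longlonglongrightarrow> 0" using assms by (intro tendsto_mult_right_zero LIMSEQ_power_zero) auto
  then obtain N where N: "x * Q ^ N < (1 - Q) / 2"
    using assms by (metis (no_types, lifting) diff_gt_0_iff_gt divide_pos_pos lim_sequentially
        dist_real_def abs_of_nonneg diff_zero mult_nonneg_nonneg zero_le_power zero_less_numeral order_refl)
  define y where "y = x * Q ^ N"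
  have y: "0 \<le> y" "y \<le> 1" "y < (1 - Q) / 2" using assms N
    by (auto simp: y_def mult_le_one power_le_one)
  have tail: "rp y Q m \<ge> 1 / 2" for m
  proof -
    have "(\<Sum>i<m. Q ^ i) = (1 - Q ^ m) / (1 - Q)"
      using assms by (simp add: sum_gp_strict)
    also have "\<dots> \<le> 1 / (1 - Q)"
      using assms by (intro divide_right_mono) auto
    finally have "(\<Sum>i<m. Q ^ i) \<le> 1 / (1 - Q)" .
    hence "y * (\<Sum>i<m. Q ^ i) \<le> y * (1 / (1 - Q))" using y by (intro mult_left_mono) auto
    also have "\<dots> \<le> 1 / 2" using y assms by (simp add: field_simps)
    finally show ?thesis using weier_prod[OF y(1) assms(3,4) y(2), of m] by linarith
  qed
  have "\<forall>n\<ge>N. rp x Q n \<ge> rp x Q N / 2"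
  proof (intro allI impI)
    fix n assume "N \<le> n"
    then obtain m where n: "n = N + m" using le_Suc_ex by blast
    have "rp x Q n = rp x Q N * rp y Q m" unfolding n y_def by (rule rp_split)
    also have "\<dots> \<ge> rp x Q N * (1 / 2)"
      using tail[of m] rp_pos[OF assms, of N] by (intro mult_left_mono) auto
    finally show "rp x Q n \<ge> rp x Q N / 2" by simp
  qed
  hence "Pinf x Q \<ge> rp x Q N / 2"
    using rp_lim(1)[of x Q] assms by (intro LIMSEQ_le_const[OF rp_lim(1)]) auto
  moreover have "rp x Q N > 0" by (rule rp_pos[OF assms])
  ultimately show ?thesis by linarith
qed

locale qb =
  fixes q :: real
  assumes q0: "0 < q" and q1: "q < 1"
begin

definition al :: "real \<Rightarrow> nat \<Rightarrow> real" where
  "al c k = (-1) ^ k * q ^ (k * (k + 1)) * Pinf (c * (q^2) ^ k) (q^2) / rp (q^2) (q^2) k"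

definition FF :: "real \<Rightarrow> real \<Rightarrow> real" where
  "FF c z = (\<Sum>k. al c k * z ^ k)"

definition FD :: "real \<Rightarrow> real \<Rightarrow> real" where
  "FD c z = (\<Sum>k. diffs (al c) k * z ^ k)"

lemma Q01: "0 < q^2" "q^2 < 1"
  using q0 q1 by (auto simp: power_less_one_iff)

lemma PQ: "Pinf (q^2) (q^2) > 0"
  using Q01 by (intro Pinf_pos) auto

lemma rpQ: "rp (q^2) (q^2) k \<ge> Pinf (q^2) (q^2)"
  using Q01 by (intro rp_lim(2)) auto

lemma rpQ_pos: "rp (q^2) (q^2) k > 0"
  using rpQ PQ by (meson order.strict_trans2)

lemma al_bound:
  assumes "0 \<le> c" "c \<le> 1"
  shows "\<bar>al c k\<bar> \<le> q ^ (k * (k + 1)) / Pinf (q^2) (q^2)"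
proof -
  have x: "0 \<le> c * (q^2)^k" "c * (q^2)^k \<le> 1"
    using assms Q01 by (auto simp: mult_le_one power_le_one)
  have P: "0 \<le> Pinf (c * (q^2) ^ k) (q^2)" "Pinf (c * (q^2) ^ k) (q^2) \<le> 1"
    using Pinf_bounds[OF x] Q01 by auto
  have "\<bar>al c k\<bar> = q ^ (k * (k + 1)) * Pinf (c * (q^2) ^ k) (q^2) / rp (q^2) (q^2) k"
    unfolding al_def using P rpQ_pos[of k] q0 by (simp add: abs_mult power_abs)
  also have "\<dots> \<le> q ^ (k * (k + 1)) * 1 / rp (q^2) (q^2) k"
    using P rpQ_pos[of k] q0 by (intro divide_right_mono mult_left_mono) auto
  also have "\<dots> \<le> q ^ (k * (k + 1)) / Pinf (q^2) (q^2)"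
    using rpQ[of k] PQ q0 by (simp add: frac_le)
  finally show ?thesis .
qed

lemma summable_qq:
  assumes "0 \<le> r"
  shows "summable (\<lambda>k. q ^ (k * (k + 1)) * r ^ k)"
proof -
  have "(\<lambda>n. q ^ n * r) \<longlonglongrightarrow> 0"
    using q0 q1 by (intro tendsto_mult_left_zero LIMSEQ_power_zero) auto
  then obtain N where N: "\<forall>n\<ge>N. q ^ n * r < 1/2"
    by (metis (no_types, lifting) lim_sequentially dist_real_def diff_zero abs_less_iff zero_less_divide_iff zero_less_one zero_less_numeral)
  show ?thesis
  proof (rule summable_ratio_test[of "1/2" N])
    fix n assume n: "N \<le> n"
    have e: "Suc n * (Suc n + 1) = n * (n + 1) + (2 * n + 2)" by simp
    have "q ^ (2 * n + 2) \<le> q ^ n" using q0 q1 by (intro power_decreasing) auto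
    hence "q ^ (2 * n + 2) * r \<le> q ^ n * r" using assms by (intro mult_right_mono) auto
    hence le: "q ^ (2 * n + 2) * r \<le> 1/2" using N n by fastforce
    have eq: "q ^ (Suc n * (Suc n + 1)) * r ^ Suc n = (q ^ (2 * n + 2) * r) * (q ^ (n * (n + 1)) * r ^ n)"
      unfolding e power_add power_Suc by (simp only: mult_ac)
    have "norm (q ^ (Suc n * (Suc n + 1)) * r ^ Suc n) = (q ^ (2 * n + 2) * r) * (q ^ (n * (n + 1)) * r ^ n)"
      using q0 assms unfolding eq by simp
    also have "\<dots> \<le> 1/2 * (q ^ (n * (n + 1)) * r ^ n)"
      using le q0 assms by (intro mult_right_mono) auto
    also have "\<dots> = 1/2 * norm (q ^ (n * (n + 1)) * r ^ n)" using q0 assms by simp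
    finally show "norm (q ^ (Suc n * (Suc n + 1)) * r ^ Suc n) \<le> 1/2 * norm (q ^ (n * (n + 1)) * r ^ n)" .
  qed simp
qed

lemma al_summable:
  assumes "0 \<le> c" "c \<le> 1"
  shows "summable (\<lambda>k. al c k * z ^ k)"
proof (rule summable_comparison_test)
  show "summable (\<lambda>k. q ^ (k * (k + 1)) * \<bar>z\<bar> ^ k / Pinf (q^2) (q^2))"
    using summable_qq[of "\<bar>z\<bar>"] by (intro summable_divide) auto
  show "\<exists>N. \<forall>n\<ge>N. norm (al c n * z ^ n) \<le> q ^ (n * (n + 1)) * \<bar>z\<bar> ^ n / Pinf (q^2) (q^2)"
  proof (intro exI allI impI)
    fix n :: nat
    have "norm (al c n * z ^ n) = \<bar>al c n\<bar> * \<bar>z\<bar> ^ n" by (simp add: abs_mult power_abs)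
    also have "\<dots> \<le> q ^ (n * (n + 1)) / Pinf (q^2) (q^2) * \<bar>z\<bar> ^ n"
      using al_bound[OF assms] by (intro mult_right_mono) auto
    finally show "norm (al c n * z ^ n) \<le> q ^ (n * (n + 1)) * \<bar>z\<bar> ^ n / Pinf (q^2) (q^2)" by simp
  qed
qed

lemma FF_deriv:
  assumes "0 \<le> c" "c \<le> 1"
  shows "(FF c has_real_derivative FD c z) (at z)"
  unfolding FF_def[abs_def] FD_def
  by (rule termdiffs_strong_converges_everywhere) (rule al_summable[OF assms])

lemma FF_0: "FF c 0 = Pinf c (q^2)"
proof -
  have "FF c 0 = al c 0" unfolding FF_def by (rule powser_zero)
  then show ?thesis by (simp add: al_def)
qed

lemma al_I1:
  assumes "0 \<le> c" "c \<le> 1"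
  shows "al c k = al (c * q^2) k * (1 - c * (q^2) ^ k)"
proof -
  have x: "0 \<le> c * (q^2)^k" "c * (q^2)^k \<le> 1"
    using assms Q01 by (auto simp: mult_le_one power_le_one)
  have "Pinf (c * (q^2)^k) (q^2) = (1 - c * (q^2)^k) * Pinf (c * (q^2)^k * q^2) (q^2)"
    using Pinf_rec[OF x] Q01 by auto
  also have "c * (q^2)^k * q^2 = c * q^2 * (q^2)^k" by simp
  finally show ?thesis unfolding al_def by simp
qed

lemma FF_I1:
  assumes "0 \<le> c" "c * q^2 \<le> 1" "c \<le> 1"
  shows "FF c z = FF (c * q^2) z - c * FF (c * q^2) (q^2 * z)"
proof -
  have cq: "0 \<le> c * q^2" using assms by simp
  have s1: "(\<lambda>k. al (c * q^2) k * z ^ k) sums FF (c * q^2) z"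
    unfolding FF_def by (rule summable_sums[OF al_summable[OF cq assms(2)]])
  have s2: "(\<lambda>k. al (c * q^2) k * (q^2 * z) ^ k) sums FF (c * q^2) (q^2 * z)"
    unfolding FF_def by (rule summable_sums[OF al_summable[OF cq assms(2)]])
  have s: "(\<lambda>k. al (c * q^2) k * z ^ k - c * (al (c * q^2) k * (q^2 * z) ^ k)) sums
      (FF (c * q^2) z - c * FF (c * q^2) (q^2 * z))"
    by (intro sums_diff s1 sums_mult s2)
  have "(\<lambda>k. al (c * q^2) k * z ^ k - c * (al (c * q^2) k * (q^2 * z) ^ k)) = (\<lambda>k. al c k * z ^ k)"
    by (rule ext) (simp add: al_I1[OF assms(1,3)] power_mult_distrib algebra_simps)
  with s have "(\<lambda>k. al c k * z ^ k) sums (FF (c * q^2) z - c * FF (c * q^2) (q^2 * z))" by simp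
  then show ?thesis unfolding FF_def by (rule sums_unique[symmetric])
qed

lemma al_I2:
  assumes "0 \<le> c" "c \<le> 1"
  shows "al c (Suc k) * (1 - (q^2) ^ Suc k) = - ((q^2) ^ Suc k * al (c * q^2) k)"
proof -
  have "(q^2) ^ Suc k < 1" using Q01 by (intro power_Suc_less_one) auto
  hence ne: "1 - (q^2) ^ Suc k \<noteq> 0" by linarith
  have r: "rp (q^2) (q^2) (Suc k) = rp (q^2) (q^2) k * (1 - (q^2) ^ Suc k)"
    by (simp add: rp_Suc)
  have e: "Suc k * (Suc k + 1) = k * (k + 1) + 2 * Suc k" by simp
  have p: "q ^ (Suc k * (Suc k + 1)) = q ^ (k * (k + 1)) * (q^2) ^ Suc k"
    unfolding e power_add power_mult[of q 2] by (rule refl)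
  have c: "c * (q^2) ^ Suc k = c * q^2 * (q^2) ^ k" by simp
  show ?thesis
    unfolding al_def r p c using ne rpQ_pos[of k] by (simp add: field_simps)
qed

lemma FF_I2:
  assumes "0 \<le> c" "c * q^2 \<le> 1" "c \<le> 1"
  shows "FF c z - FF c (q^2 * z) = - (q^2 * z) * FF (c * q^2) (q^2 * z)"
proof -
  have cq: "0 \<le> c * q^2" using assms by simp
  define f where "f k = al c k * z ^ k - al c k * (q^2 * z) ^ k" for k
  have s: "f sums (FF c z - FF c (q^2 * z))"
    unfolding f_def FF_def by (intro sums_diff summable_sums al_summable assms)
  have s2: "(\<lambda>k. al (c * q^2) k * (q^2 * z) ^ k) sums FF (c * q^2) (q^2 * z)"
    unfolding FF_def by (rule summable_sums[OF al_summable[OF cq assms(2)]])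
  have "(\<lambda>k. - (q^2 * z) * (al (c * q^2) k * (q^2 * z) ^ k)) sums (- (q^2 * z) * FF (c * q^2) (q^2 * z))"
    by (rule sums_mult[OF s2])
  moreover have "(\<lambda>k. - (q^2 * z) * (al (c * q^2) k * (q^2 * z) ^ k)) = (\<lambda>k. f (Suc k))"
  proof (rule ext)
    fix k
    have "f (Suc k) = (al c (Suc k) * (1 - (q^2) ^ Suc k)) * z ^ Suc k"
      unfolding f_def by (simp add: power_mult_distrib algebra_simps)
    also have "\<dots> = - ((q^2) ^ Suc k * al (c * q^2) k) * z ^ Suc k"
      by (simp only: al_I2[OF assms(1,3)])
    also have "\<dots> = - (q^2 * z) * (al (c * q^2) k * (q^2 * z) ^ k)"
      by (simp add: power_mult_distrib algebra_simps)
    finally show "- (q^2 * z) * (al (c * q^2) k * (q^2 * z) ^ k) = f (Suc k)" by simp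
  qed
  ultimately have "(\<lambda>k. f (Suc k)) sums (- (q^2 * z) * FF (c * q^2) (q^2 * z))" by simp
  hence "f sums (- (q^2 * z) * FF (c * q^2) (q^2 * z) + f 0)" by (simp add: sums_Suc_iff)
  hence "f sums (- (q^2 * z) * FF (c * q^2) (q^2 * z))" by (simp add: f_def)
  then show ?thesis using s sums_unique2 by blast
qed

end



lemma lag_alg:
  fixes A A1 B B1 g g1 h h1 a b c Q t ck :: real
  assumes "A = g - c * g1" "A - A1 = - (Q * (a * t)) * g1"
    and "B = h - c * h1" "B - B1 = - (Q * (b * t)) * h1"
  shows "ck * (b * h * A - a * g * B) - ck * c * (b * h1 * A1 - a * g1 * B1) = (b - a) * (ck * (A * B))"
proof -
  have g: "g = A + c * g1" and h: "h = B + c * h1" using assms(1,3) by auto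
  have A1: "A1 = A + Q * (a * t) * g1" and B1: "B1 = B + Q * (b * t) * h1" using assms(2,4) by auto
  show ?thesis unfolding g h A1 B1 by (simp add: algebra_simps)
qed

lemma quot_alg: "(d::real) \<noteq> 0 \<Longrightarrow> (P / d) * f - k * (R / d) = (P * f - k * R) / d"
  by (simp add: field_simps)

context qb
begin

lemma FF_cont: "0 \<le> c \<Longrightarrow> c \<le> 1 \<Longrightarrow> isCont (FF c) z"
  using FF_deriv by (rule DERIV_isCont)

lemma FF_bounded:
  assumes "0 \<le> c" "c \<le> 1"
  shows "\<exists>M. \<forall>z. \<bar>z\<bar> \<le> R \<longrightarrow> \<bar>FF c z\<bar> \<le> M"
proof -
  obtain M where M: "\<forall>z. - \<bar>R\<bar> \<le> z \<and> z \<le> \<bar>R\<bar> \<longrightarrow> \<bar>FF c z\<bar> \<le> M"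
    using isCont_bounded[of "- \<bar>R\<bar>" "\<bar>R\<bar>" "\<lambda>z. \<bar>FF c z\<bar>"] FF_cont[OF assms]
    by (metis abs_ge_zero neg_le_0_iff_le order_trans continuous_rabs)
  show ?thesis by (rule exI[of _ M]) (use M in \<open>auto simp: abs_le_iff\<close>)
qed

lemma lagrange:
  assumes c: "0 < c" "c < 1"
  shows "(\<lambda>k. (b - a) * (c ^ k * (FF c (a * (q^2)^k) * FF c (b * (q^2)^k)))) sums
           (b * FF (c * q^2) b * FF c a - a * FF (c * q^2) a * FF c b)"
proof -
  define Q where "Q = q^2"
  have Q: "0 < Q" "Q < 1" using Q01 by (auto simp: Q_def)
  have cQ: "0 \<le> c * Q" "c * Q \<le> 1" "0 \<le> c" "c \<le> 1" using c Q by (auto simp: mult_le_one)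
  define F where "F = FF c"
  define G where "G = FF (c * Q)"
  have I1: "F z = G z - c * G (Q * z)" for z
    unfolding F_def G_def Q_def by (rule FF_I1) (use cQ in \<open>auto simp: Q_def\<close>)
  have I2: "F z - F (Q * z) = - (Q * z) * G (Q * z)" for z
    unfolding F_def G_def Q_def by (rule FF_I2) (use cQ in \<open>auto simp: Q_def\<close>)
  define W where "W k = c ^ k * (b * G (b * Q ^ k) * F (a * Q ^ k) - a * G (a * Q ^ k) * F (b * Q ^ k))" for k
  have step: "W k - W (Suc k) = (b - a) * (c ^ k * (F (a * Q ^ k) * F (b * Q ^ k)))" for k
  proof -
    have Wsuc: "W (Suc k) = c ^ k * c * (b * G (Q * (b * Q ^ k)) * F (Q * (a * Q ^ k)) - a * G (Q * (a * Q ^ k)) * F (Q * (b * Q ^ k)))"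
      by (simp add: W_def mult_ac)
    have Wk: "W k = c ^ k * (b * G (b * Q ^ k) * F (a * Q ^ k) - a * G (a * Q ^ k) * F (b * Q ^ k))"
      by (simp add: W_def)
    show ?thesis unfolding Wsuc Wk
      by (rule lag_alg[OF I1[of "a * Q ^ k"] I2[of "a * Q ^ k"] I1[of "b * Q ^ k"] I2[of "b * Q ^ k"]])
  qed
  obtain M1 where M1: "\<forall>z. \<bar>z\<bar> \<le> \<bar>a\<bar> + \<bar>b\<bar> \<longrightarrow> \<bar>F z\<bar> \<le> M1"
    using FF_bounded[OF cQ(3,4)] unfolding F_def by blast
  obtain M2 where M2: "\<forall>z. \<bar>z\<bar> \<le> \<bar>a\<bar> + \<bar>b\<bar> \<longrightarrow> \<bar>G z\<bar> \<le> M2"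
    using FF_bounded[OF cQ(1,2)] unfolding G_def by blast
  have Qk: "\<bar>x * Q ^ k\<bar> \<le> \<bar>a\<bar> + \<bar>b\<bar>" if "x = a \<or> x = b" for x k
  proof -
    have "\<bar>x * Q ^ k\<bar> = \<bar>x\<bar> * Q ^ k" using Q by (simp add: abs_mult)
    also have "\<dots> \<le> \<bar>x\<bar> * 1" using Q by (intro mult_left_mono power_le_one) auto
    finally show ?thesis using that by auto
  qed
  have Wb: "norm (W k) \<le> c ^ k * (\<bar>b\<bar> * M2 * M1 + \<bar>a\<bar> * M2 * M1)" for k
  proof -
    have f1: "\<bar>F (a * Q ^ k)\<bar> \<le> M1" "\<bar>F (b * Q ^ k)\<bar> \<le> M1" using M1 Qk by auto
    have g1: "\<bar>G (a * Q ^ k)\<bar> \<le> M2" "\<bar>G (b * Q ^ k)\<bar> \<le> M2" using M2 Qk by auto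
    have "\<bar>b * G (b * Q ^ k) * F (a * Q ^ k)\<bar> \<le> \<bar>b\<bar> * M2 * M1"
      unfolding abs_mult using f1 g1 by (intro mult_mono) auto
    moreover have "\<bar>a * G (a * Q ^ k) * F (b * Q ^ k)\<bar> \<le> \<bar>a\<bar> * M2 * M1"
      unfolding abs_mult using f1 g1 by (intro mult_mono) auto
    ultimately have "\<bar>b * G (b * Q ^ k) * F (a * Q ^ k) - a * G (a * Q ^ k) * F (b * Q ^ k)\<bar> \<le> \<bar>b\<bar> * M2 * M1 + \<bar>a\<bar> * M2 * M1"
      by linarith
    then show ?thesis unfolding W_def using c by (simp add: abs_mult mult_left_mono)
  qed
  have W0: "W \<longlonglongrightarrow> 0"
  proof (rule Lim_null_comparison)
    show "\<forall>\<^sub>F k in sequentially. norm (W k) \<le> c ^ k * (\<bar>b\<bar> * M2 * M1 + \<bar>a\<bar> * M2 * M1)"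
      using Wb by simp
    show "(\<lambda>k. c ^ k * (\<bar>b\<bar> * M2 * M1 + \<bar>a\<bar> * M2 * M1)) \<longlonglongrightarrow> 0"
      using c by (intro tendsto_mult_left_zero LIMSEQ_power_zero) auto
  qed
  have "(\<lambda>k. W k - W (Suc k)) sums (W 0 - 0)" by (rule telescope_sums'[OF W0])
  moreover have "W 0 = b * G b * F a - a * G a * F b" by (simp add: W_def)
  ultimately show ?thesis unfolding step by (simp add: F_def G_def Q_def)
qed


lemma T_summable:
  assumes c: "0 < c" "c < 1"
  shows "summable (\<lambda>k. c ^ k * (FF c (a * (q^2)^k) * FF c (b * (q^2)^k)))"
proof -
  obtain M where M: "\<forall>z. \<bar>z\<bar> \<le> \<bar>a\<bar> + \<bar>b\<bar> \<longrightarrow> \<bar>FF c z\<bar> \<le> M"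
    using FF_bounded[of c] c by fastforce
  have Qk: "\<bar>y * (q^2) ^ k\<bar> \<le> \<bar>a\<bar> + \<bar>b\<bar>" if "y = a \<or> y = b" for y k
  proof -
    have "\<bar>y * (q^2) ^ k\<bar> = \<bar>y\<bar> * (q^2) ^ k" by (simp add: abs_mult)
    also have "\<dots> \<le> \<bar>y\<bar> * 1"
      by (intro mult_left_mono power_le_one less_imp_le[OF Q01(1)] less_imp_le[OF Q01(2)] abs_ge_zero)
    finally show ?thesis using that by auto
  qed
  show ?thesis
  proof (rule summable_comparison_test)
    show "summable (\<lambda>k. c ^ k * (M * M))" using c by (intro summable_mult2 summable_geometric) auto
    show "\<exists>N. \<forall>n\<ge>N. norm (c ^ n * (FF c (a * (q^2)^n) * FF c (b * (q^2)^n))) \<le> c ^ n * (M * M)"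
    proof (intro exI allI impI)
      fix n :: nat
      have f: "\<bar>FF c (a * (q^2)^n)\<bar> \<le> M" "\<bar>FF c (b * (q^2)^n)\<bar> \<le> M" using M Qk by auto
      have "\<bar>FF c (a * (q^2)^n) * FF c (b * (q^2)^n)\<bar> \<le> M * M"
        unfolding abs_mult using f by (intro mult_mono) auto
      then show "norm (c ^ n * (FF c (a * (q^2)^n) * FF c (b * (q^2)^n))) \<le> c ^ n * (M * M)"
        using c by (simp add: abs_mult mult_left_mono)
    qed
  qed
qed

lemma key_pos:
  assumes c: "0 < c" "c < 1"
  shows "(FF (c * q^2) x + x * FD (c * q^2) x) * FF c x - (x * FF (c * q^2) x) * FD c x > 0"
proof -
  define Q where "Q = q^2"
  have Q: "0 < Q" "Q < 1" using Q01 by (auto simp: Q_def)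
  have cQ: "0 \<le> c * Q" "c * Q \<le> 1" "0 \<le> c" "c \<le> 1" using c Q by (auto simp: mult_le_one)
  define F where "F = FF c"
  define G where "G = FF (c * Q)"
  have dF: "(F has_real_derivative FD c y) (at y)" for y
    unfolding F_def by (rule FF_deriv) (use cQ in auto)
  have dG: "(G has_real_derivative FD (c * Q) y) (at y)" for y
    unfolding G_def by (rule FF_deriv) (use cQ in auto)
  have cF: "isCont F y" for y using dF by (rule DERIV_isCont)
  define K where "K y = y * G y" for y
  have dK: "(K has_real_derivative (G x + x * FD (c * Q) x)) (at x)"
  proof -
    have d0: "(K has_real_derivative (1 * G x + FD (c * Q) x * x)) (at x)"
      unfolding K_def[abs_def] by (intro DERIV_mult DERIV_ident dG)
    have eq: "1 * G x + FD (c * Q) x * x = G x + x * FD (c * Q) x" by simp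
    show ?thesis using d0 unfolding eq .
  qed
  define T where "T b = (\<Sum>k. c ^ k * (F (x * Q ^ k) * F (b * Q ^ k)))" for b
  obtain M where M: "\<forall>z. \<bar>z\<bar> \<le> \<bar>x\<bar> + 1 \<longrightarrow> \<bar>F z\<bar> \<le> M"
    using FF_bounded[OF cQ(3,4)] unfolding F_def by blast
  have Qk: "\<bar>y * Q ^ k\<bar> \<le> \<bar>y\<bar>" for y k
  proof -
    have "\<bar>y * Q ^ k\<bar> = \<bar>y\<bar> * Q ^ k" using Q by (simp add: abs_mult)
    also have "\<dots> \<le> \<bar>y\<bar> * 1" using Q by (intro mult_left_mono power_le_one) auto
    finally show ?thesis by simp
  qed
  have ul: "uniform_limit (cball x 1) (\<lambda>n b. \<Sum>i<n. c ^ i * (F (x * Q ^ i) * F (b * Q ^ i))) T sequentially"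
    unfolding T_def
  proof (rule Weierstrass_m_test)
    show "summable (\<lambda>k. c ^ k * (M * M))" using c by (intro summable_mult2 summable_geometric) auto
    fix n b assume b: "b \<in> cball x 1"
    have bb: "\<bar>b\<bar> \<le> \<bar>x\<bar> + 1" using b by (auto simp: dist_real_def)
    have f: "\<bar>F (x * Q ^ n)\<bar> \<le> M" "\<bar>F (b * Q ^ n)\<bar> \<le> M"
      using M Qk[of x n] Qk[of b n] bb by auto
    have "\<bar>F (x * Q ^ n) * F (b * Q ^ n)\<bar> \<le> M * M"
      unfolding abs_mult using f by (intro mult_mono) auto
    then show "norm (c ^ n * (F (x * Q ^ n) * F (b * Q ^ n))) \<le> c ^ n * (M * M)"
      using c by (simp add: abs_mult mult_left_mono)
  qed
  have "continuous_on (cball x 1) T"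
  proof (rule uniform_limit_theorem[OF _ ul])
    have "isCont (\<lambda>b. F (b * Q ^ i)) b" for i b
      by (rule isCont_o2[OF _ cF]) (intro continuous_intros)
    hence "continuous_on (cball x 1) (\<lambda>b. \<Sum>i<n. c ^ i * (F (x * Q ^ i) * F (b * Q ^ i)))" for n
      by (intro continuous_at_imp_continuous_on ballI continuous_intros) auto
    then show "\<forall>\<^sub>F n in sequentially. continuous_on (cball x 1) (\<lambda>b. \<Sum>i<n. c ^ i * (F (x * Q ^ i) * F (b * Q ^ i)))"
      by simp
  qed simp
  hence "isCont T x" by (rule continuous_on_interior) auto
  hence tT: "(T \<longlongrightarrow> T x) (at x)" by (simp add: isCont_def)
  have eqT: "T b = ((K b - K x) / (b - x)) * F x - K x * ((F b - F x) / (b - x))" if b: "b \<noteq> x" for b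
  proof -
    have s1: "(\<lambda>k. (b - x) * (c ^ k * (F (x * Q ^ k) * F (b * Q ^ k)))) sums (b * G b * F x - x * G x * F b)"
      using lagrange[OF c, of b x] unfolding F_def G_def Q_def .
    have s2: "(\<lambda>k. (b - x) * (c ^ k * (F (x * Q ^ k) * F (b * Q ^ k)))) sums ((b - x) * T b)"
      unfolding T_def F_def Q_def by (intro sums_mult summable_sums T_summable c)
    have h: "(b - x) * T b = b * G b * F x - x * G x * F b" using s1 s2 sums_unique2 by blast
    have bx: "b - x \<noteq> 0" using b by simp
    have e1: "T b = (b * G b * F x - x * G x * F b) / (b - x)"
      using h bx by (simp add: eq_divide_eq mult.commute)
    have e2: "((K b - K x) / (b - x)) * F x - K x * ((F b - F x) / (b - x)) = (b * G b * F x - x * G x * F b) / (b - x)"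
    proof -
      have "((K b - K x) / (b - x)) * F x - K x * ((F b - F x) / (b - x)) =
          ((K b - K x) * F x - K x * (F b - F x)) / (b - x)"
        using bx by (rule quot_alg)
      also have "(K b - K x) * F x - K x * (F b - F x) = b * G b * F x - x * G x * F b"
        unfolding K_def by (simp add: algebra_simps)
      finally show ?thesis .
    qed
    show ?thesis using e1 e2 by simp
  qed
  have lim1: "((\<lambda>b. ((K b - K x) / (b - x)) * F x - K x * ((F b - F x) / (b - x))) \<longlongrightarrow>
      (G x + x * FD (c * Q) x) * F x - K x * FD c x) (at x)"
    using dK dF[of x] unfolding has_field_derivative_iff by (intro tendsto_intros) auto
  have "\<forall>\<^sub>F b in at x. ((K b - K x) / (b - x)) * F x - K x * ((F b - F x) / (b - x)) = T b"
    using eqT by (auto simp: eventually_at_filter)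
  hence lim2: "(T \<longlongrightarrow> (G x + x * FD (c * Q) x) * F x - K x * FD c x) (at x)"
    using lim1 tendsto_cong by fastforce
  have TD: "T x = (G x + x * FD (c * Q) x) * F x - K x * FD c x"
    using tendsto_unique[OF _ tT lim2] by simp
  have F0: "F 0 > 0" unfolding F_def FF_0 using Q01 c by (intro Pinf_pos) auto
  have limF: "(\<lambda>k. F (x * Q ^ k)) \<longlonglongrightarrow> F 0"
  proof -
    have "(\<lambda>k. x * Q ^ k) \<longlonglongrightarrow> 0" using Q by (intro tendsto_mult_right_zero LIMSEQ_power_zero) auto
    then show ?thesis using isCont_tendsto_compose[OF cF] by blast
  qed
  obtain k where k: "F (x * Q ^ k) \<noteq> 0"
  proof (rule ccontr)
    assume "\<not> thesis"
    hence "\<forall>k. F (x * Q ^ k) = 0" using that by blast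
    hence "(\<lambda>k. F (x * Q ^ k)) \<longlonglongrightarrow> 0" by simp
    then show False using limF F0 LIMSEQ_unique by fastforce
  qed
  have "T x > 0" unfolding T_def
  proof (rule suminf_pos2)
    show "summable (\<lambda>k. c ^ k * (F (x * Q ^ k) * F (x * Q ^ k)))"
      unfolding F_def Q_def by (rule T_summable[OF c])
    show "0 \<le> c ^ n * (F (x * Q ^ n) * F (x * Q ^ n))" for n using c by simp
    have "0 < F (x * Q ^ k) * F (x * Q ^ k)" using k by (cases "F (x * Q ^ k) > 0") (auto simp: mult_neg_neg)
    then show "0 < c ^ k * (F (x * Q ^ k) * F (x * Q ^ k))" using c by simp
  qed
  then show ?thesis using TD unfolding F_def G_def K_def Q_def by simp
qed

lemma three_alg:
  fixes A B C u v Q c z :: real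
  assumes "B = u - c * v" "A - B = - (Q * z) * u" "B - C = - (Q * (Q * z)) * v"
  shows "Q * A + c * C = (Q + c - Q * Q * z) * B"
proof -
  have A: "A = B - Q * z * u" and C: "C = B + Q * Q * z * v" using assms(2,3) by (auto simp: algebra_simps)
  show ?thesis unfolding A C assms(1) by (simp add: algebra_simps)
qed

lemma ivt_zero:
  fixes F :: "real \<Rightarrow> real"
  assumes "p \<le> r" "F p * F r \<le> 0" "\<And>t. isCont F t"
  shows "\<exists>t. p \<le> t \<and> t \<le> r \<and> F t = 0"
proof -
  have "(F p \<le> 0 \<and> 0 \<le> F r) \<or> (F r \<le> 0 \<and> 0 \<le> F p)"
    using assms(2) unfolding mult_le_0_iff by blast
  then show ?thesis using IVT[of F p 0 r] IVT2[of F r 0 p] assms by blast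
qed

lemma unb_zero:
  assumes c: "0 < c" "c < 1"
  shows "\<exists>z>M. FF c z = 0"
proof -
  define Q where "Q = q^2"
  have Q: "0 < Q" "Q < 1" using Q01 by (auto simp: Q_def)
  have cQ: "0 \<le> c * Q" "c * Q \<le> 1" "0 \<le> c" "c \<le> 1" using c Q by (auto simp: mult_le_one)
  define F where "F = FF c"
  define G where "G = FF (c * Q)"
  have I1: "F z = G z - c * G (Q * z)" for z
    unfolding F_def G_def Q_def by (rule FF_I1) (use cQ in \<open>auto simp: Q_def\<close>)
  have I2: "F z - F (Q * z) = - (Q * z) * G (Q * z)" for z
    unfolding F_def G_def Q_def by (rule FF_I2) (use cQ in \<open>auto simp: Q_def\<close>)
  have cF: "isCont F y" for y unfolding F_def by (rule FF_cont) (use cQ in auto)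
  define z where "z = (\<bar>M\<bar> + 2) / (Q * Q)"
  have zQ: "Q * Q * z = \<bar>M\<bar> + 2" using Q by (simp add: z_def)
  have QQ: "Q * Q > 0" using Q by simp
  have z0: "z > 0" using Q by (simp add: z_def)
  have o1: "Q * (Q * z) \<le> Q * z" using Q z0 by (simp add: mult_left_le_one_le)
  have o2: "Q * z \<le> z" using Q z0 by (simp add: mult_left_le_one_le)
  have three: "Q * F z + c * F (Q * (Q * z)) = (Q + c - Q * Q * z) * F (Q * z)"
    by (rule three_alg[OF I1[of "Q * z"] I2[of z] I2[of "Q * z"]])
  have neg: "Q + c - Q * Q * z < 0" using zQ Q c by linarith
  have "F (Q * (Q * z)) * F (Q * z) \<le> 0 \<or> F (Q * z) * F z \<le> 0"
  proof (rule ccontr)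
    assume "\<not> ?thesis"
    hence p1: "F (Q * (Q * z)) * F (Q * z) > 0" and p2: "F (Q * z) * F z > 0" by auto
    have "(Q * F z + c * F (Q * (Q * z))) * F (Q * z) = Q * (F (Q * z) * F z) + c * (F (Q * (Q * z)) * F (Q * z))"
      by (simp add: algebra_simps)
    also have "\<dots> > 0" using mult_pos_pos[OF Q(1) p2] mult_pos_pos[OF c(1) p1] by (rule add_pos_pos)
    finally have "(Q + c - Q * Q * z) * (F (Q * z) * F (Q * z)) > 0" unfolding three by (simp add: mult.assoc)
    moreover have "F (Q * z) * F (Q * z) \<ge> 0" by simp
    ultimately show False using neg by (simp add: mult_less_0_iff zero_less_mult_iff)
  qed
  then obtain t where t: "Q * (Q * z) \<le> t" "F t = 0"
  proof
    assume h: "F (Q * (Q * z)) * F (Q * z) \<le> 0"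
    obtain t where "Q * (Q * z) \<le> t" "F t = 0" using ivt_zero[OF o1 h cF] by blast
    then show thesis using that by blast
  next
    assume h: "F (Q * z) * F z \<le> 0"
    obtain t where t1: "Q * z \<le> t" "F t = 0" using ivt_zero[OF o2 h cF] by blast
    show thesis by (rule that[of t]) (use t1 o1 in auto)
  qed
  have "t > M" using t zQ by (simp add: mult.assoc)
  then show ?thesis using t unfolding F_def by blast
qed

end



lemma qpoch_real: "qpoch (of_real x) Q n = of_real (rp x Q n)"
  by (simp add: qpoch_def rp_def)

lemma qpoch_inf_real:
  assumes "0 \<le> x" "x \<le> 1" "0 \<le> Q" "Q \<le> 1"
  shows "qpoch_inf (of_real x) Q = of_real (Pinf x Q)"
proof -
  have "(\<lambda>n. qpoch (of_real x) Q n) \<longlonglongrightarrow> of_real (Pinf x Q)"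
    unfolding qpoch_real by (intro tendsto_of_real rp_lim(1)[OF assms])
  then show ?thesis unfolding qpoch_inf_def by (rule limI)
qed

context qb
begin

lemma J_eq:
  fixes \<nu> x :: real
  assumes nu: "\<nu> > -1"
  defines "c \<equiv> q powr (2 * \<nu> + 2)"
  shows "hahn_exton_J q (of_real \<nu>) (of_real x) =
         exp (of_real \<nu> * Ln (of_real x)) / of_real (Pinf (q^2) (q^2)) * of_real (FF c (x^2))"
proof -
  have c: "0 < c" "c < 1"
  proof -
    show "0 < c" unfolding c_def using q0 by simp
    have "q powr (2 * \<nu> + 2) < 1 powr (2 * \<nu> + 2)"
      using q0 q1 nu by (intro powr_less_mono2) auto
    then show "c < 1" unfolding c_def by simp
  qed
  have x1: "0 \<le> c * (q^2)^k" "c * (q^2)^k \<le> 1" for k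
    using c Q01 by (auto simp: mult_le_one power_le_one)
  have pw: "(of_real q :: complex) powr (2 * of_real \<nu> + 2 * of_nat k + 2) = of_real (c * (q^2)^k)" for k
  proof -
    have e: "(2 * of_real \<nu> + 2 * of_nat k + 2 :: complex) = of_real (2 * \<nu> + 2 + real (2 * k))" by simp
    have "q powr (2 * \<nu> + 2 + real (2 * k)) = c * q ^ (2 * k)"
      unfolding c_def powr_add using q0 powr_realpow[OF q0, of "2 * k"] by simp
    also have "q ^ (2 * k) = (q^2)^k" by (simp add: power_mult)
    finally have h: "q powr (2 * \<nu> + 2 + real (2 * k)) = c * (q^2)^k" .
    have "(of_real q :: complex) powr (2 * of_real \<nu> + 2 * of_nat k + 2) = of_real (q powr (2 * \<nu> + 2 + real (2 * k)))"
      unfolding e by (rule powr_of_real) (use q0 in simp)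
    then show ?thesis unfolding h .
  qed
  have trm: "(-1) ^ k * of_real (q ^ (k * (k + 1))) *
            qpoch_inf (of_real q powr (2 * of_real \<nu> + 2 * of_nat k + 2)) (q^2)
            / qpoch (of_real (q^2)) (q^2) k * (of_real x :: complex) ^ (2 * k) = of_real (al c k * (x^2) ^ k)" for k
    unfolding pw qpoch_inf_real[OF x1 less_imp_le[OF Q01(1)] less_imp_le[OF Q01(2)]] qpoch_real al_def
    by (simp add: power_mult)
  have s: "(\<lambda>k. al c k * (x^2) ^ k) sums FF c (x^2)"
    unfolding FF_def by (intro summable_sums al_summable) (use c in auto)
  have s2: "(\<lambda>k. (of_real (al c k * (x^2) ^ k) :: complex)) sums of_real (FF c (x^2))"
    by (rule sums_of_real[OF s])
  have PQ': "qpoch_inf (of_real (q^2)) (q^2) = of_real (Pinf (q^2) (q^2))"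
    by (rule qpoch_inf_real) (use Q01 in auto)
  show ?thesis
    unfolding hahn_exton_J_def trm PQ' using sums_unique[OF s2] by simp
qed

end


lemma sqrt_range:
  fixes a :: "nat \<Rightarrow> real"
  assumes "range a = {z. 0 < z \<and> P z}"
  shows "range (\<lambda>n. sqrt (a n)) = {x. 0 < x \<and> P (x^2)}"
proof
  show "range (\<lambda>n. sqrt (a n)) \<subseteq> {x. 0 < x \<and> P (x^2)}"
  proof
    fix x assume "x \<in> range (\<lambda>n. sqrt (a n))"
    then obtain n where x: "x = sqrt (a n)" by auto
    have "a n \<in> {z. 0 < z \<and> P z}" using assms by (metis rangeI)
    hence an: "0 < a n" "P (a n)" by auto
    have "x^2 = a n" using x an by simp
    then show "x \<in> {x. 0 < x \<and> P (x^2)}" using x an by simp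
  qed
next
  show "{x. 0 < x \<and> P (x^2)} \<subseteq> range (\<lambda>n. sqrt (a n))"
  proof
    fix x assume "x \<in> {x. 0 < x \<and> P (x^2)}"
    hence x: "0 < x" "P (x^2)" by auto
    hence "x^2 \<in> range a" using assms by simp
    then obtain n where n: "x^2 = a n" by auto
    have "x = sqrt (a n)" using x n[symmetric] by simp
    then show "x \<in> range (\<lambda>n. sqrt (a n))" by auto
  qed
qed

lemma strict_mono_sqrt:
  fixes a :: "nat \<Rightarrow> real"
  assumes "strict_mono a"
  shows "strict_mono (\<lambda>n. sqrt (a n))"
  using assms unfolding strict_mono_def by simp

theorem theorem3p7:
  fixes q \<nu> :: real
  assumes "0 < q" and "q < 1" and "\<nu> > -1"
  shows "\<exists>j j' :: nat \<Rightarrow> real.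
           strict_mono j \<and> range j = pos_zeros q \<nu> \<and>
           strict_mono j' \<and> range j' = pos_zeros q (\<nu> + 1) \<and>
           0 < j 0 \<and> (\<forall>k. j k < j' k \<and> j' k < j (Suc k))"
proof -
  interpret qb q using assms(1,2) by unfold_locales
  define c where "c = q powr (2 * \<nu> + 2)"
  have c: "0 < c" "c < 1"
  proof -
    show "0 < c" unfolding c_def using q0 by simp
    have "q powr (2 * \<nu> + 2) < 1 powr (2 * \<nu> + 2)"
      using q0 q1 assms(3) by (intro powr_less_mono2) auto
    then show "c < 1" unfolding c_def by simp
  qed
  have c1: "q powr (2 * (\<nu> + 1) + 2) = c * q^2"
  proof -
    have "2 * (\<nu> + 1) + 2 = (2 * \<nu> + 2) + 2" by simp
    then show ?thesis unfolding c_def using q0 by (simp add: powr_add)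
  qed
  have PQ0: "(of_real (Pinf (q^2) (q^2)) :: complex) \<noteq> 0" using PQ by simp
  have Z0: "pos_zeros q \<nu> = {x. 0 < x \<and> FF c (x^2) = 0}"
    unfolding pos_zeros_def J_eq[OF assms(3)] c_def using PQ0 by auto
  have Z1: "pos_zeros q (\<nu> + 1) = {x. 0 < x \<and> FF (c * q^2) (x^2) = 0}"
  proof -
    have nu1: "\<nu> + 1 > -1" using assms(3) by simp
    show ?thesis unfolding pos_zeros_def J_eq[OF nu1] c1 using PQ0 by auto
  qed
  have cc: "0 \<le> c" "c \<le> 1" "0 \<le> c * q^2" "c * q^2 \<le> 1" using c Q01 by (auto simp: mult_le_one)
  have dK: "((\<lambda>z. z * FF (c * q^2) z) has_real_derivative (FF (c * q^2) x + x * FD (c * q^2) x)) (at x)" for x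
  proof -
    have d0: "((\<lambda>z. z * FF (c * q^2) z) has_real_derivative (1 * FF (c * q^2) x + FD (c * q^2) x * x)) (at x)"
      by (intro DERIV_mult DERIV_ident FF_deriv cc)
    have eq: "1 * FF (c * q^2) x + FD (c * q^2) x * x = FF (c * q^2) x + x * FD (c * q^2) x" by simp
    show ?thesis using d0 unfolding eq .
  qed
  have F0: "FF c 0 > 0" unfolding FF_0 using c Q01 by (intro Pinf_pos) auto
  obtain a b :: "nat \<Rightarrow> real" where ab: "strict_mono a" "range a = {z. 0 < z \<and> FF c z = 0}"
    "strict_mono b" "range b = {z. 0 < z \<and> z * FF (c * q^2) z = 0}"
    "0 < a 0" "\<forall>n. a n < b n \<and> b n < a (Suc n)"
    using interlace_generic[of "FF c" "FD c" "\<lambda>z. z * FF (c * q^2) z" "\<lambda>z. FF (c * q^2) z + z * FD (c * q^2) z",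
        OF FF_deriv[OF cc(1,2)] dK F0 _ key_pos[OF c] unb_zero[OF c]] by auto
  have rb: "range b = {z. 0 < z \<and> FF (c * q^2) z = 0}" using ab(4) by auto
  show ?thesis
  proof (intro exI conjI allI)
    show "strict_mono (\<lambda>n. sqrt (a n))" by (rule strict_mono_sqrt[OF ab(1)])
    show "strict_mono (\<lambda>n. sqrt (b n))" by (rule strict_mono_sqrt[OF ab(3)])
    show "range (\<lambda>n. sqrt (a n)) = pos_zeros q \<nu>" unfolding Z0 by (rule sqrt_range[OF ab(2)])
    show "range (\<lambda>n. sqrt (b n)) = pos_zeros q (\<nu> + 1)" unfolding Z1 by (rule sqrt_range[OF rb])
    show "0 < sqrt (a 0)" using ab(5) by simp
    fix k
    show "sqrt (a k) < sqrt (b k)" using ab(6) by simp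
    show "sqrt (b k) < sqrt (a (Suc k))" using ab(6) by simp
  qed
qed

end
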